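(* There exists an open interval $I_2\subset\mathbb{R}$ containing $0$ such that the following hold. (1) There exist functions $\eta_2:I_2\to\mathbb{R}^3$ with $|\eta_2(t)|\ge1$ for all $t\in I_2$, and, for each $t\in I_2$, $T_t:I_2\to\mathbb{R}$, such that for all $x,t\in I_2$, $$(T_t(x))^2=(x+x^3,\,x^2,\,1)\cdot\eta_2(t).$$ (2) For each $x\in I_2$, the function $F_x:I_2\to\mathbb{R}$, $F_x(t):=(T_t(x))^2$, satisfies: (a) $F_x(x)=0$; (b) for $t\in I_2$, $\frac{\partial F_x}{\partial t}(t)=0$ if and only if $t=x$; (c) $\frac{\partial^2F_0}{\partial t^2}(0)=2$, and there is $\epsilon>0$ such that $\epsilon\le\frac{\partial^2F_x}{\partial t^2}(t)\le\epsilon^{-1}$ for all $x,t\in I_2$. *)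

theory Defs
  imports "HOL-Analysis.Analysis"
begin

end

theory Submission
  imports Defs
begin

definition myP :: "real \<Rightarrow> real \<Rightarrow> real" where
  "myP x s = (s - x)^2 * (1 - s^2 - 2*x * s)"
definition myP1 :: "real \<Rightarrow> real \<Rightarrow> real" where
  "myP1 x s = 2*(s - x)*(1 - 2 * s^2 - 2*x * s + x^2)"
definition myP2 :: "real \<Rightarrow> real \<Rightarrow> real" where
  "myP2 x s = 2*(1 - 2 * s^2 - 2*x * s + x^2) + 2*(s - x)*(-4 * s - 2*x)"

definition TT :: "real \<Rightarrow> real \<Rightarrow> real" where
  "TT s x = (s - x) * sqrt (1 - s^2 - 2*x * s)"

lemma PP_deriv: "(myP x has_real_derivative myP1 x s) (at s)"
proof -
  have "myP x = (\<lambda>s. (s - x)^2 * (1 - s^2 - 2 * x * s))" by (simp add: myP_def fun_eq_iff)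
  moreover have "((\<lambda>s. (s - x)^2 * (1 - s^2 - 2 * x * s)) has_real_derivative myP1 x s) (at s)"
    by (rule derivative_eq_intros refl)+ (simp add: myP1_def algebra_simps power2_eq_square)
  ultimately show ?thesis by simp
qed
lemma P1_deriv: "(myP1 x has_real_derivative myP2 x s) (at s)"
proof -
  have "myP1 x = (\<lambda>s. 2*(s - x)*(1 - 2 * s^2 - 2 * x * s + x^2))" by (simp add: myP1_def fun_eq_iff)
  moreover have "((\<lambda>s. 2*(s - x)*(1 - 2 * s^2 - 2 * x * s + x^2)) has_real_derivative myP2 x s) (at s)"
    by (rule derivative_eq_intros refl)+ (simp add: myP2_def algebra_simps power2_eq_square)
  ultimately show ?thesis by simp
qed

lemma small_bounds:
  fixes x t :: real
  assumes "\<bar>t\<bar> < 1/10" "\<bar>x\<bar> < 1/10"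
  shows "t^2 \<le> 1/100" "x^2 \<le> 1/100" "\<bar>x * t\<bar> \<le> 1/100" "0 \<le> t^2" "0 \<le> x^2"
proof -
  have "\<bar>t\<bar>*\<bar>t\<bar> \<le> 1/10 * (1/10)" by (rule mult_mono) (use assms in auto)
  thus "t^2 \<le> 1/100" by (simp add: power2_eq_square abs_mult[symmetric])
  have "\<bar>x\<bar>*\<bar>x\<bar> \<le> 1/10 * (1/10)" by (rule mult_mono) (use assms in auto)
  thus "x^2 \<le> 1/100" by (simp add: power2_eq_square abs_mult[symmetric])
  have "\<bar>x\<bar>*\<bar>t\<bar> \<le> 1/10 * (1/10)" by (rule mult_mono) (use assms in auto)
  thus "\<bar>x * t\<bar> \<le> 1/100" by (simp add: abs_mult)
qed simp_all

lemma local_facts: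
  fixes x t :: real
  assumes "0 < 1 - t^2 - 2*x * t"
  shows "((\<lambda>s. (TT s x)^2) has_real_derivative myP1 x t) (at t)"
    "deriv (\<lambda>s. (TT s x)^2) t = myP1 x t"
    "(deriv (\<lambda>s. (TT s x)^2) has_real_derivative myP2 x t) (at t)"
    "deriv (deriv (\<lambda>s. (TT s x)^2)) t = myP2 x t"
proof -
  define U where "U = {s::real. 0 < 1 - s^2 - 2*x * s}"
  have oU: "open U" unfolding U_def
    by (intro open_Collect_less continuous_intros)
  have tU: "t \<in> U" using assms U_def by simp
  have eq: "myP x s = (TT s x)^2" if "s \<in> U" for s
    using that unfolding U_def myP_def TT_def by (simp add: power_mult_distrib)
  have d1: "((\<lambda>s. (TT s x)^2) has_real_derivative myP1 x s) (at s)" if "s \<in> U" for s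
    by (rule has_field_derivative_transform_within_open[OF PP_deriv oU that eq])
  have dd: "deriv (\<lambda>s. (TT s x)^2) s = myP1 x s" if "s \<in> U" for s
    using d1[OF that] by (rule DERIV_imp_deriv)
  show "((\<lambda>s. (TT s x)^2) has_real_derivative myP1 x t) (at t)" using d1[OF tU] .
  show "deriv (\<lambda>s. (TT s x)^2) t = myP1 x t" using dd[OF tU] .
  show d2: "(deriv (\<lambda>s. (TT s x)^2) has_real_derivative myP2 x t) (at t)"
    by (rule has_field_derivative_transform_within_open[OF P1_deriv oU tU]) (simp add: dd)
  show "deriv (deriv (\<lambda>s. (TT s x)^2)) t = myP2 x t"
    using d2 by (rule DERIV_imp_deriv)
qed

theorem mainTheorem8:
  shows "\<exists>I :: real set. is_interval I \<and> open I \<and> 0 \<in> I \<and>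
    (\<exists>(\<eta> :: real \<Rightarrow> real^3) (T :: real \<Rightarrow> real \<Rightarrow> real).
       (\<forall>t\<in>I. norm (\<eta> t) \<ge> 1) \<and>
       (\<forall>x\<in>I. \<forall>t\<in>I. (T t x)^2 = vector [x + x^3, x^2, 1] \<bullet> \<eta> t) \<and>
       (\<forall>x\<in>I. (T x x)^2 = 0 \<and>
          (\<forall>t\<in>I. (\<lambda>s. (T s x)^2) differentiable (at t) \<and>
                  deriv (\<lambda>s. (T s x)^2) differentiable (at t) \<and>
                  (deriv (\<lambda>s. (T s x)^2) t = 0 \<longleftrightarrow> t = x))) \<and>
       deriv (deriv (\<lambda>s. (T s 0)^2)) 0 = 2 \<and>
       (\<exists>\<epsilon>>0. \<forall>x\<in>I. \<forall>t\<in>I.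
          \<epsilon> \<le> deriv (deriv (\<lambda>s. (T s x)^2)) t \<and>
          deriv (deriv (\<lambda>s. (T s x)^2)) t \<le> 1 / \<epsilon>))"
proof -
  define I where "I = {-1/10 <..< 1/10 :: real}"
  define \<eta> :: "real \<Rightarrow> real^3" where "\<eta> t = vector [-2 * t, 1 + 3 * t^2, t^2 - t^4]" for t
  have pos: "0 < 1 - t^2 - 2*x * t" if "x \<in> I" "t \<in> I" for x t
  proof -
    have "\<bar>t\<bar> < 1/10" "\<bar>x\<bar> < 1/10" using that I_def by auto
    from small_bounds[OF this] show ?thesis by (simp add: abs_le_iff)
  qed
  have bds: "1/3 \<le> myP2 x t \<and> myP2 x t \<le> 3" if "x \<in> I" "t \<in> I" for x t
  proof -
    have a: "\<bar>t\<bar> < 1/10" "\<bar>x\<bar> < 1/10" using that I_def by auto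
    have e: "myP2 x t = 2 - 12 * t^2 + 6 * x^2" unfolding myP2_def by (simp add: algebra_simps power2_eq_square)
    from small_bounds[OF a] show ?thesis unfolding e by linarith
  qed
  show ?thesis
  proof (intro exI[of _ I] conjI exI[of _ \<eta>] exI[of _ TT] exI[of _ "1/3::real"] ballI allI impI)
    show "is_interval I" "open I" "0 \<in> I" unfolding I_def by (auto simp: is_interval_def)
  next
    fix t assume "t \<in> I"
    have "1 \<le> \<bar>\<eta> t $ 2\<bar>" by (simp add: \<eta>_def)
    thus "1 \<le> norm (\<eta> t)" using component_le_norm_cart[of "\<eta> t" 2] by linarith
  next
    fix x t assume "x \<in> I" "t \<in> I"
    have "(TT t x)^2 = myP x t" using pos[OF \<open>x \<in> I\<close> \<open>t \<in> I\<close>]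
      unfolding myP_def TT_def by (simp add: power_mult_distrib)
    thus "(TT t x)^2 = vector [x + x^3, x^2, 1] \<bullet> \<eta> t"
      by (simp add: inner_vec_def sum_3 \<eta>_def myP_def algebra_simps power2_eq_square power3_eq_cube power4_eq_xxxx)
  next
    fix x assume "x \<in> I" show "(TT x x)^2 = 0" by (simp add: TT_def)
  next
    fix x t assume "x \<in> I" "t \<in> I"
    note L = local_facts[OF pos[OF this]]
    show "(\<lambda>s. (TT s x)^2) differentiable (at t)"
      using L(1) real_differentiable_def by blast
    show "deriv (\<lambda>s. (TT s x)^2) differentiable (at t)"
      using L(3) real_differentiable_def by blast
    show "(deriv (\<lambda>s. (TT s x)^2) t = 0) = (t = x)"
    proof -
      have ab: "\<bar>t\<bar> < 1/10" "\<bar>x\<bar> < 1/10" using \<open>x\<in>I\<close> \<open>t\<in>I\<close> I_def by auto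
      have q: "0 < 1 - 2 * t^2 - 2 * x * t + x^2" using small_bounds[OF ab] abs_ge_self[of "x*t"] abs_ge_minus_self[of "x*t"] by (simp only: mult.assoc)
      show ?thesis using L(2) q by (simp add: myP1_def)
    qed
    show "1/3 \<le> deriv (deriv (\<lambda>s. (TT s x)^2)) t" using L(4) bds[OF \<open>x\<in>I\<close> \<open>t\<in>I\<close>] by simp
    show "deriv (deriv (\<lambda>s. (TT s x)^2)) t \<le> 1 / (1/3)" using L(4) bds[OF \<open>x\<in>I\<close> \<open>t\<in>I\<close>] by simp
  next
    have "0 \<in> I" unfolding I_def by simp
    from local_facts(4)[OF pos[OF this this]]
    show "deriv (deriv (\<lambda>s. (TT s 0)^2)) 0 = 2" by (simp add: myP2_def)
  qed simp
qed

end
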